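(* Let $A=\{a_n\}_{n\in\mathbb Z}\subset\mathbb R$ be an almost periodic set of density $d$ such that $a_n\le a_{n+1}$ for all $n\in\mathbb Z$. Then $$a_n=n/d+\phi(n),\qquad n\in\mathbb Z,$$ with an almost periodic mapping $\phi:\mathbb Z\to\mathbb R$.
   Context: A discrete locally finite multiset $A=\{a_n\}_{n\in\mathbb Z}\subset\mathbb R$ (a point may occur several times in the sequence) is called almost periodic if for every $\varepsilon>0$ the set $$E_\varepsilon=\{\tau\in\mathbb R:\ \exists\text{ a bijection }\sigma:\mathbb Z\to\mathbb Z\text{ with }\sup_n|a_n+\tau-a_{\sigma(n)}|<\varepsilon\}$$ is relatively dense, i.e. there is $L_\varepsilon>0$ with $E_\varepsilon\cap(x,x+L_\varepsilon)\ne\emptyset$ for every $x\in\mathbb R$. For such $A$ there exists the density $d=\lim_{l(I)\to\infty}\#(A\cap I)/l(I)>0$, the limit taken over half-intervals $I$ with length $l(I)\to\infty$, where $\#(A\cap I)$ counts points with multiplicity. A mapping $\phi:\mathbb Z\to\mathbb R$ is almost periodic if for every $\varepsilon>0$ the set of integers $h$ with $\sup_{n\in\mathbb Z}|\phi(n+h)-\phi(n)|<\varepsilon$ is relatively dense in $\mathbb Z$ (meets every interval of some fixed length $L_\varepsilon$). *)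

theory Defs
  imports Complex_Main
begin

text \<open>A multiset of reals is given as a sequence a :: int => real (points may repeat).\<close>

definition locally_finite_seq :: "(int \<Rightarrow> real) \<Rightarrow> bool" where
  "locally_finite_seq a \<longleftrightarrow> (\<forall>x y. finite {n. a n \<in> {x..y}})"

definition rel_dense :: "real set \<Rightarrow> bool" where
  "rel_dense E \<longleftrightarrow> (\<exists>L>0. \<forall>x. \<exists>\<tau>\<in>E. x < \<tau> \<and> \<tau> < x + L)"

text \<open>E_eps: almost periods; "sup_n |...| < eps" is written as "some delta < eps bounds all terms".\<close>
definition almost_periods :: "(int \<Rightarrow> real) \<Rightarrow> real \<Rightarrow> real set" where
  "almost_periods a \<epsilon> = {\<tau>. \<exists>\<sigma> :: int \<Rightarrow> int. bij \<sigma> \<and>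
      (\<exists>\<delta><\<epsilon>. \<forall>n. \<bar>a n + \<tau> - a (\<sigma> n)\<bar> \<le> \<delta>)}"

definition ap_set :: "(int \<Rightarrow> real) \<Rightarrow> bool" where
  "ap_set a \<longleftrightarrow> locally_finite_seq a \<and> (\<forall>\<epsilon>>0. rel_dense (almost_periods a \<epsilon>))"

definition has_density :: "(int \<Rightarrow> real) \<Rightarrow> real \<Rightarrow> bool" where
  "has_density a d \<longleftrightarrow> (\<forall>\<epsilon>>0. \<exists>L. \<forall>x l. l \<ge> L \<longrightarrow> l > 0 \<longrightarrow>
      \<bar>real (card {n. a n \<in> {x..<x+l}}) / l - d\<bar> < \<epsilon>)"

definition ap_map :: "(int \<Rightarrow> real) \<Rightarrow> bool" where
  "ap_map \<phi> \<longleftrightarrow> (\<forall>\<epsilon>>0. \<exists>L::int. L > 0 \<and> (\<forall>m::int. \<exists>h. m \<le> h \<and> h < m + L \<and>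
      (\<exists>\<delta><\<epsilon>. \<forall>n. \<bar>\<phi> (n + h) - \<phi> n\<bar> \<le> \<delta>)))"

end

theory Submission
  imports Defs
begin

locale slf =
  fixes a :: "int \<Rightarrow> real"
  assumes step: "\<And>n. a n \<le> a (n + 1)"
    and lf: "locally_finite_seq a"
begin

lemma mono_a: "m \<le> n \<Longrightarrow> a m \<le> a n"
proof -
  have *: "a m \<le> a (m + int k)" for k
  proof (induction k)
    case 0 then show ?case by simp
  next
    case (Suc k)
    have "a (m + int k) \<le> a (m + int k + 1)" by (rule step)
    moreover have "m + int (Suc k) = m + int k + 1" by simp
    ultimately show ?case using Suc by (metis order_trans)
  qed
  assume "m \<le> n"
  then have "n = m + int (nat (n - m))" by simp
  then show ?thesis using *[of "nat (n - m)"] by simp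
qed

lemma unb_above: "\<exists>n. x \<le> a n"
proof (rule ccontr)
  assume "\<not> ?thesis"
  then have "\<forall>n. a n < x" by (simp add: not_le)
  then have "{0..} \<subseteq> {n. a n \<in> {a 0..x}}" using mono_a by (auto simp: less_imp_le)
  moreover have "finite {n. a n \<in> {a 0..x}}" using lf unfolding locally_finite_seq_def by blast
  ultimately have "finite ({0..}::int set)" by (rule finite_subset)
  then show False using infinite_Ici by blast
qed

lemma unb_below: "\<exists>n. a n < x"
proof (rule ccontr)
  assume "\<not> ?thesis"
  then have "\<forall>n. x \<le> a n" by (simp add: not_less)
  then have "{..0} \<subseteq> {n. a n \<in> {x..a 0}}" using mono_a by auto
  moreover have "finite {n. a n \<in> {x..a 0}}" using lf unfolding locally_finite_seq_def by blast
  ultimately have "finite ({..0}::int set)" by (rule finite_subset)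
  then show False using infinite_Iic by blast
qed

lemma rank_ex: "\<exists>m. x \<le> a m \<and> a (m - 1) < x"
proof -
  obtain m1 where m1: "x \<le> a m1" using unb_above by blast
  obtain m0 where m0: "a m0 < x" using unb_below by blast
  have "m0 < m1"
  proof (rule ccontr)
    assume "\<not> m0 < m1"
    then have "a m1 \<le> a m0" using mono_a by simp
    then show False using m0 m1 by simp
  qed
  then have "m0 + int (nat (m1 - m0)) = m1" by simp
  then have ex: "\<exists>k::nat. x \<le> a (m0 + int k)" using m1 by metis
  define k where "k = (LEAST k::nat. x \<le> a (m0 + int k))"
  have k1: "x \<le> a (m0 + int k)" using LeastI_ex[OF ex] k_def by simp
  have "k \<noteq> 0" using m0 k1 by (cases k) auto
  then obtain j where j: "k = Suc j" by (cases k) auto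
  have "\<not> x \<le> a (m0 + int j)" using not_less_Least[of j "\<lambda>k. x \<le> a (m0 + int k)"] j k_def by simp
  then have "x \<le> a (m0 + int k) \<and> a (m0 + int k - 1) < x" using k1 j by simp
  then show ?thesis by blast
qed

definition r :: "real \<Rightarrow> int" where "r x = (SOME m. x \<le> a m \<and> a (m - 1) < x)"

lemma r_prop: "x \<le> a (r x)" "a (r x - 1) < x"
  using someI_ex[OF rank_ex[of x]] unfolding r_def by auto

lemma rank_iff: "x \<le> a n \<longleftrightarrow> r x \<le> n"
proof
  assume "x \<le> a n"
  show "r x \<le> n"
  proof (rule ccontr)
    assume "\<not> r x \<le> n"
    then have "a n \<le> a (r x - 1)" using mono_a by simp
    then show False using r_prop(2)[of x] \<open>x \<le> a n\<close> by simp
  qed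
next
  assume "r x \<le> n"
  then show "x \<le> a n" using mono_a r_prop(1)[of x] by (meson order_trans)
qed

lemma r_mono: "x \<le> y \<Longrightarrow> r x \<le> r y"
  using rank_iff r_prop(1)[of y] by (meson order_trans)

lemma count_eq: "{n. a n \<in> {u..<v}} = {r u..<r v}"
proof -
  have "a n < v \<longleftrightarrow> n < r v" for n using rank_iff[of v n] by linarith
  then show ?thesis using rank_iff by auto
qed

lemma card_count: "card {n. a n \<in> {u..<v}} = nat (r v - r u)"
  unfolding count_eq by simp

lemma fin_count: "finite {n. a n \<in> {u..<v}}"
  unfolding count_eq by simp

lemma matching:
  assumes bij: "bij \<sigma>" and cl: "\<And>n. \<bar>a n + \<tau> - a (\<sigma> n)\<bar> \<le> \<delta>"
  shows "\<exists>h. \<forall>z. r (z + \<tau> - \<delta>) \<le> r z + h \<and> r z + h \<le> r (z + \<tau> + \<delta>)"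
proof -
  have fwd: "card {n. a n \<in> {u..<v}} \<le> card {n. a n \<in> {u+\<tau>-\<delta>..<v+\<tau>+\<delta>}}" for u v
  proof (rule card_inj_on_le)
    show "inj_on \<sigma> {n. a n \<in> {u..<v}}" using bij bij_is_inj inj_on_subset by blast
    show "\<sigma> ` {n. a n \<in> {u..<v}} \<subseteq> {n. a n \<in> {u+\<tau>-\<delta>..<v+\<tau>+\<delta>}}"
    proof
      fix j assume "j \<in> \<sigma> ` {n. a n \<in> {u..<v}}"
      then obtain n where n: "j = \<sigma> n" "a n \<in> {u..<v}" by auto
      have "\<bar>a n + \<tau> - a (\<sigma> n)\<bar> \<le> \<delta>" by (rule cl)
      then show "j \<in> {n. a n \<in> {u+\<tau>-\<delta>..<v+\<tau>+\<delta>}}" using n by (auto simp: abs_le_iff)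
    qed
    show "finite {n. a n \<in> {u+\<tau>-\<delta>..<v+\<tau>+\<delta>}}" by (rule fin_count)
  qed
  have bwd: "card {n. a n \<in> {u..<v}} \<le> card {n. a n \<in> {u-\<tau>-\<delta>..<v-\<tau>+\<delta>}}" for u v
  proof (rule card_inj_on_le)
    have bi: "bij (inv \<sigma>)" using bij bij_imp_bij_inv by blast
    show "inj_on (inv \<sigma>) {n. a n \<in> {u..<v}}" using bi bij_is_inj inj_on_subset by blast
    show "inv \<sigma> ` {n. a n \<in> {u..<v}} \<subseteq> {n. a n \<in> {u-\<tau>-\<delta>..<v-\<tau>+\<delta>}}"
    proof
      fix j assume "j \<in> inv \<sigma> ` {n. a n \<in> {u..<v}}"
      then obtain n where n: "j = inv \<sigma> n" "a n \<in> {u..<v}" by auto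
      have "\<sigma> j = n" using n(1) bij by (simp add: bij_is_surj surj_f_inv_f)
      have "\<bar>a j + \<tau> - a (\<sigma> j)\<bar> \<le> \<delta>" by (rule cl)
      then show "j \<in> {n. a n \<in> {u-\<tau>-\<delta>..<v-\<tau>+\<delta>}}" using n \<open>\<sigma> j = n\<close> by (auto simp: abs_le_iff)
    qed
    show "finite {n. a n \<in> {u-\<tau>-\<delta>..<v-\<tau>+\<delta>}}" by (rule fin_count)
  qed
  have dd0: "0 \<le> \<delta>" using cl[of 0] by linarith
  have key: "r z - r (z+\<tau>+\<delta>) \<le> r w - r (w+\<tau>-\<delta>)" for z w
  proof (cases "w < z")
    case True
    have "nat (r z - r w) \<le> nat (r (z+\<tau>+\<delta>) - r (w+\<tau>-\<delta>))"
      using fwd[of w z] unfolding card_count by simp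
    moreover have "r w \<le> r z" using True r_mono by simp
    moreover have "r (w+\<tau>-\<delta>) \<le> r (z+\<tau>+\<delta>)" using True dd0 r_mono by simp
    ultimately have "r z - r w \<le> r (z+\<tau>+\<delta>) - r (w+\<tau>-\<delta>)" by (simp add: nat_le_eq_zle)
    then show ?thesis by linarith
  next
    case False
    then have zw: "r z \<le> r w" using r_mono by simp
    show ?thesis
    proof (cases "z+\<tau>+\<delta> \<le> w+\<tau>-\<delta>")
      case True
      have "nat (r (w+\<tau>-\<delta>) - r (z+\<tau>+\<delta>)) \<le> nat (r w - r z)"
        using bwd[of "z+\<tau>+\<delta>" "w+\<tau>-\<delta>"] unfolding card_count by simp
      moreover have "r (z+\<tau>+\<delta>) \<le> r (w+\<tau>-\<delta>)" using True r_mono by simp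
      ultimately show ?thesis using zw by (simp add: nat_le_eq_zle)
    next
      case False
      then have "r (w+\<tau>-\<delta>) \<le> r (z+\<tau>+\<delta>)" using r_mono by simp
      then show ?thesis using zw by linarith
    qed
  qed
  define S where "S = range (\<lambda>z. r z - r (z+\<tau>+\<delta>))"
  have bdd: "bdd_above S" unfolding S_def using key[of _ 0] by (auto intro!: bdd_aboveI)
  have ne: "S \<noteq> {}" unfolding S_def by simp
  define c where "c = Sup S"
  have up: "r z - r (z+\<tau>+\<delta>) \<le> c" for z
    unfolding c_def using bdd by (intro cSup_upper) (auto simp: S_def)
  have lo: "c \<le> r w - r (w+\<tau>-\<delta>)" for w
    unfolding c_def using ne by (intro cSup_least) (auto simp: S_def key)
  show ?thesis
    apply (rule exI[of _ "-c"])
    using up lo by (smt (verit))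
qed

lemma iter_lo:
  assumes "\<forall>w. r (w + t) \<le> r w + h"
  shows "r (w + real k * t) \<le> r w + int k * h"
proof (induction k)
  case 0 then show ?case by simp
next
  case (Suc k)
  have "r (w + real (Suc k) * t) = r ((w + real k * t) + t)" by (simp add: algebra_simps)
  also have "\<dots> \<le> r (w + real k * t) + h" using assms by blast
  also have "\<dots> \<le> r w + int (Suc k) * h" using Suc by (simp add: algebra_simps)
  finally show ?case .
qed

lemma iter_hi:
  assumes "\<forall>z. r z + h \<le> r (z + t)"
  shows "r z + int k * h \<le> r (z + real k * t)"
proof (induction k)
  case 0 then show ?case by simp
next
  case (Suc k)
  have "r z + int (Suc k) * h = (r z + int k * h) + h" by (simp add: algebra_simps)
  also have "\<dots> \<le> r (z + real k * t) + h" using Suc by simp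
  also have "\<dots> \<le> r ((z + real k * t) + t)" using assms by blast
  also have "\<dots> = r (z + real (Suc k) * t)" by (simp add: algebra_simps)
  finally show ?case .
qed

lemma big_k: "t > 0 \<Longrightarrow> \<exists>k::nat. k \<ge> 1 \<and> real k * t \<ge> L"
proof -
  assume t: "t > 0"
  obtain n :: nat where "L / t < real n" using reals_Archimedean2 by blast
  then have "L \<le> real (max 1 n) * t" using t
    by (smt (verit, ccfv_SIG) divide_less_eq of_nat_le_iff max.cobounded2 mult_right_mono)
  then show ?thesis by (intro exI[of _ "max 1 n"]) simp
qed

lemma dens_lo:
  assumes dens: "has_density a d" and lo: "\<forall>w. r (w + t) \<le> r w + h" and t: "t > 0"
  shows "d * t \<le> h"
proof (rule ccontr)
  assume "\<not> d * t \<le> h"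
  define \<eta> where "\<eta> = (d * t - h) / t"
  have eta: "\<eta> > 0" using \<open>\<not> d * t \<le> h\<close> t unfolding \<eta>_def by simp
  obtain L where L: "\<And>x l. l \<ge> L \<Longrightarrow> l > 0 \<Longrightarrow>
      \<bar>real (card {n. a n \<in> {x..<x+l}}) / l - d\<bar> < \<eta>"
    using dens eta unfolding has_density_def by blast
  obtain k :: nat where k: "k \<ge> 1" "real k * t \<ge> L" using big_k t by blast
  define l where "l = real k * t"
  have l0: "l > 0" using k t unfolding l_def by simp
  have c: "real (card {n. a n \<in> {0..<0+l}}) = real_of_int (r l - r 0)"
    using r_mono[of 0 l] l0 unfolding card_count by simp
  have ub: "r l - r 0 \<le> int k * h" using iter_lo[OF lo, of 0 k] unfolding l_def by simp
  have "\<bar>real_of_int (r l - r 0) / l - d\<bar> < \<eta>" using L[of l 0] k l0 c unfolding l_def by simp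
  then have "real_of_int (r l - r 0) / l > d - \<eta>" by linarith
  then have "real_of_int (r l - r 0) > (d - \<eta>) * l" using l0 by (simp add: field_simps)
  also have "(d - \<eta>) * l = real k * h"
    unfolding l_def \<eta>_def using t by (simp add: field_simps)
  finally have "real_of_int (r l - r 0) > real k * h" .
  moreover have "real_of_int (r l - r 0) \<le> real k * h" using ub
    by (metis of_int_le_iff of_int_mult of_int_of_nat_eq)
  ultimately show False by simp
qed

lemma dens_hi:
  assumes dens: "has_density a d" and hi: "\<forall>z. r z + h \<le> r (z + t)" and t: "t > 0"
  shows "h \<le> d * t"
proof (rule ccontr)
  assume "\<not> h \<le> d * t"
  define \<eta> where "\<eta> = (h - d * t) / t"
  have eta: "\<eta> > 0" using \<open>\<not> h \<le> d * t\<close> t unfolding \<eta>_def by simp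
  obtain L where L: "\<And>x l. l \<ge> L \<Longrightarrow> l > 0 \<Longrightarrow>
      \<bar>real (card {n. a n \<in> {x..<x+l}}) / l - d\<bar> < \<eta>"
    using dens eta unfolding has_density_def by blast
  obtain k :: nat where k: "k \<ge> 1" "real k * t \<ge> L" using big_k t by blast
  define l where "l = real k * t"
  have l0: "l > 0" using k t unfolding l_def by simp
  have c: "real (card {n. a n \<in> {0..<0+l}}) = real_of_int (r l - r 0)"
    using r_mono[of 0 l] l0 unfolding card_count by simp
  have lb: "int k * h \<le> r l - r 0" using iter_hi[OF hi, of 0 k] unfolding l_def by simp
  have "\<bar>real_of_int (r l - r 0) / l - d\<bar> < \<eta>" using L[of l 0] k l0 c unfolding l_def by simp
  then have "real_of_int (r l - r 0) / l < d + \<eta>" by linarith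
  then have "real_of_int (r l - r 0) < (d + \<eta>) * l" using l0 by (simp add: field_simps)
  also have "(d + \<eta>) * l = real k * h"
    unfolding l_def \<eta>_def using t by (simp add: field_simps)
  finally have "real_of_int (r l - r 0) < real k * h" .
  moreover have "real k * h \<le> real_of_int (r l - r 0)" using lb
    by (metis of_int_le_iff of_int_mult of_int_of_nat_eq)
  ultimately show False by simp
qed

lemma good_tau:
  assumes dens: "has_density a d" and E: "\<tau> \<in> almost_periods a \<epsilon>" and te: "\<epsilon> \<le> \<tau>"
  shows "\<exists>h \<delta>. \<delta> < \<epsilon> \<and> 0 \<le> \<delta> \<and> (\<forall>n. \<bar>a (n+h) - a n - \<tau>\<bar> \<le> \<delta>)
     \<and> d*(\<tau>-\<delta>) \<le> h \<and> h \<le> d*(\<tau>+\<delta>) \<and> 1 \<le> h"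
proof -
  obtain \<sigma> \<delta> where s: "bij \<sigma>" "\<delta> < \<epsilon>" "\<And>n. \<bar>a n + \<tau> - a (\<sigma> n)\<bar> \<le> \<delta>"
    using E unfolding almost_periods_def by blast
  have d0: "0 \<le> \<delta>" using s(3)[of 0] by linarith
  obtain h where h: "\<And>z. r (z + \<tau> - \<delta>) \<le> r z + h" "\<And>z. r z + h \<le> r (z + \<tau> + \<delta>)"
    using matching[OF s(1) s(3)] by blast
  have app1: "a n + \<tau> - \<delta> \<le> a (n+h)" for n
  proof -
    have "r (a n) \<le> n" using rank_iff[of "a n" n] by simp
    then have "r (a n + \<tau> - \<delta>) \<le> n + h" using h(1)[of "a n"] by linarith
    then show ?thesis using rank_iff by blast
  qed
  have app2: "a (n+h) \<le> a n + \<tau> + \<delta>" for n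
  proof (rule ccontr)
    assume neg: "\<not> a (n+h) \<le> a n + \<tau> + \<delta>"
    define z where "z = a (n+h) - \<tau> - \<delta>"
    have "r (z + \<tau> + \<delta>) \<le> n + h" unfolding z_def using rank_iff[of "a (n+h)" "n+h"] by simp
    then have "r z \<le> n" using h(2)[of z] by linarith
    then have "z \<le> a n" using rank_iff by blast
    then show False using neg unfolding z_def by simp
  qed
  have tpos: "\<tau> - \<delta> > 0" using s(2) te by simp
  have lo: "\<forall>w. r (w + (\<tau> - \<delta>)) \<le> r w + h" using h(1) by (simp add: add_diff_eq)
  have hi: "\<forall>z. r z + h \<le> r (z + (\<tau> + \<delta>))" using h(2) by (simp add: add.assoc)
  have b1: "d*(\<tau>-\<delta>) \<le> h" using dens_lo[OF dens lo tpos] by simp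
  have b2: "h \<le> d*(\<tau>+\<delta>)" using dens_hi[OF dens hi] tpos d0 by simp
  have "r (a 0) \<le> 0" using rank_iff[of "a 0" 0] by simp
  moreover have "0 < r (a 0 + (\<tau> - \<delta>))"
    using rank_iff[of "a 0 + (\<tau> - \<delta>)" 0] tpos by linarith
  ultimately have "1 \<le> h" using lo[rule_format, of "a 0"] by linarith
  show ?thesis
    using s(2) d0 app1 app2 b1 b2 \<open>1 \<le> h\<close>
    by (intro exI[of _ h] exI[of _ \<delta>]) (auto simp: abs_le_iff algebra_simps)
qed

end

theorem theorem1:
  fixes a :: "int \<Rightarrow> real" and d :: real
  assumes "ap_set a"
    and "has_density a d"
    and "\<And>n. a n \<le> a (n + 1)"
  shows "\<exists>\<phi>. ap_map \<phi> \<and> (\<forall>n. a n = real_of_int n / d + \<phi> n)"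
proof -
  interpret slf a using assms(1,3) unfolding ap_set_def by unfold_locales auto
  have rd: "\<And>e. e > 0 \<Longrightarrow> rel_dense (almost_periods a e)"
    using assms(1) unfolding ap_set_def by blast
  have dpos: "d > 0"
  proof -
    obtain L where L: "L > 0" "\<And>x. \<exists>\<tau>\<in>almost_periods a 1. x < \<tau> \<and> \<tau> < x + L"
      using rd[of 1] unfolding rel_dense_def by auto
    obtain \<tau> where t: "\<tau> \<in> almost_periods a 1" "1 < \<tau>" using L(2)[of 1] by auto
    obtain h \<delta> where hd: "0 \<le> \<delta>" "h \<le> d*(\<tau>+\<delta>)" "1 \<le> h"
      using good_tau[OF assms(2) t(1)] t(2) by auto
    show ?thesis
    proof (rule ccontr)
      assume "\<not> d > 0"
      then have "d*(\<tau>+\<delta>) \<le> 0" using hd(1) t(2) by (simp add: mult_nonpos_nonneg)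
      then show False using hd by linarith
    qed
  qed
  define \<phi> where "\<phi> n = a n - real_of_int n / d" for n
  have symm: "\<forall>n. \<bar>\<phi> (n + - h) - \<phi> n\<bar> \<le> c" if "\<forall>n. \<bar>\<phi> (n + h) - \<phi> n\<bar> \<le> c" for h c
  proof
    fix n
    have "\<bar>\<phi> (n - h + h) - \<phi> (n - h)\<bar> \<le> c" using that by blast
    then show "\<bar>\<phi> (n + - h) - \<phi> n\<bar> \<le> c" by (simp add: abs_minus_commute)
  qed
  have "ap_map \<phi>"
    unfolding ap_map_def
  proof (intro allI impI)
    fix \<epsilon> :: real assume ep: "\<epsilon> > 0"
    define e where "e = \<epsilon> / 3"
    have e0: "e > 0" using ep unfolding e_def by simp
    obtain L where L: "L > 0" "\<And>x. \<exists>\<tau>\<in>almost_periods a e. x < \<tau> \<and> \<tau> < x + L"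
      using rd[OF e0] unfolding rel_dense_def by auto
    define K where "K = \<lceil>d * (L + 2*e)\<rceil>"
    have A: "\<exists>h. m < h \<and> h < m + K \<and> (\<exists>\<delta><\<epsilon>. \<forall>n. \<bar>\<phi> (n + h) - \<phi> n\<bar> \<le> \<delta>)"
      if m0: "m \<ge> 0" for m
    proof -
      define x where "x = real_of_int m / d + e"
      obtain \<tau> where t: "\<tau> \<in> almost_periods a e" "x < \<tau>" "\<tau> < x + L" using L(2)[of x] by auto
      have "real_of_int m / d \<ge> 0" using m0 dpos by simp
      then have te: "e \<le> \<tau>" using t(2) unfolding x_def by simp
      obtain h \<delta> where hd: "\<delta> < e" "0 \<le> \<delta>" "\<And>n. \<bar>a (n+h) - a n - \<tau>\<bar> \<le> \<delta>"
          "d*(\<tau>-\<delta>) \<le> h" "h \<le> d*(\<tau>+\<delta>)"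
        using good_tau[OF assms(2) t(1) te] by blast
      have q1: "\<tau> - \<delta> \<le> h / d" using hd(4) dpos by (simp add: field_simps)
      have q2: "h / d \<le> \<tau> + \<delta>" using hd(5) dpos by (simp add: field_simps)
      have est: "\<bar>\<phi> (n + h) - \<phi> n\<bar> \<le> 2 * \<delta>" for n
      proof -
        have "\<phi> (n + h) - \<phi> n = (a (n+h) - a n - \<tau>) + (\<tau> - h / d)"
          unfolding \<phi>_def by (simp add: field_simps add_divide_distrib)
        then show ?thesis using hd(3)[of n] q1 q2 by (simp add: abs_le_iff)
      qed
      have "d * (x - e) = m" unfolding x_def using dpos by simp
      moreover have "d * (x - e) < d * (\<tau> - \<delta>)" using dpos t(2) hd(1) by simp
      ultimately have mh: "m < h" using hd(4) by linarith
      have "d * (\<tau> + \<delta>) < d * (x + L + e)" using dpos t(3) hd(1) by simp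
      also have "d * (x + L + e) = m + d * (L + 2*e)" unfolding x_def using dpos
        by (simp add: field_simps)
      also have "\<dots> \<le> m + K" unfolding K_def by linarith
      finally have hK: "h < m + K" using hd(5) by linarith
      show ?thesis using mh hK est hd(1,2) unfolding e_def
        by (intro exI[of _ h] conjI exI[of _ "2*\<delta>"]) auto
    qed
    obtain h0 where "0 < h0" "h0 < 0 + K" using A[of 0] by auto
    then have K0: "K > 0" by simp
    show "\<exists>L::int. L > 0 \<and> (\<forall>m::int. \<exists>h. m \<le> h \<and> h < m + L \<and>
      (\<exists>\<delta><\<epsilon>. \<forall>n. \<bar>\<phi> (n + h) - \<phi> n\<bar> \<le> \<delta>))"
    proof (rule exI[of _ "2*K"], intro conjI allI)
      show "0 < 2*K" using K0 by simp
    next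
      fix m :: int
      show "\<exists>h. m \<le> h \<and> h < m + 2*K \<and> (\<exists>\<delta><\<epsilon>. \<forall>n. \<bar>\<phi> (n + h) - \<phi> n\<bar> \<le> \<delta>)"
      proof (cases "m \<ge> 0")
        case True
        then obtain h where "m < h" "h < m + K" "\<exists>\<delta><\<epsilon>. \<forall>n. \<bar>\<phi> (n + h) - \<phi> n\<bar> \<le> \<delta>"
          using A by blast
        then show ?thesis using K0 by (intro exI[of _ h]) auto
      next
        case False
        show ?thesis
        proof (cases "m > - K")
          case True
          obtain h where "0 < h" "h < 0 + K" "\<exists>\<delta><\<epsilon>. \<forall>n. \<bar>\<phi> (n + h) - \<phi> n\<bar> \<le> \<delta>"
            using A[of 0] by blast
          then show ?thesis using False True by (intro exI[of _ h]) auto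
        next
          case F2: False
          obtain h where h: "- m - K < h" "h < - m - K + K" "\<exists>\<delta><\<epsilon>. \<forall>n. \<bar>\<phi> (n + h) - \<phi> n\<bar> \<le> \<delta>"
            using A[of "- m - K"] F2 by auto
          then obtain \<delta> where "\<delta> < \<epsilon>" "\<forall>n. \<bar>\<phi> (n + h) - \<phi> n\<bar> \<le> \<delta>" by blast
          then have "\<forall>n. \<bar>\<phi> (n + - h) - \<phi> n\<bar> \<le> \<delta>" using symm by blast
          then show ?thesis using h(1,2) K0 \<open>\<delta> < \<epsilon>\<close> by (intro exI[of _ "- h"]) auto
        qed
      qed
    qed
  qed
  moreover have "\<forall>n. a n = real_of_int n / d + \<phi> n" unfolding \<phi>_def by simp
  ultimately show ?thesis by blast
qed

end
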